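(* Consider the interconnected system described in the context, with a partition $\{1,\dots,n\}=I_\Sigma\cup I_{\max}$. Assume each subsystem has the asymptotic gain (AG) property in the mixed sense, i.e. there are $\overline\gamma_{ij},\overline\gamma_i\in\mathcal{K}\cup\{0\}$ such that for every initial value $x_i(0)$ and all inputs $x_j\in L_\infty(\mathbb{R}_+,\mathbb{R}^{N_j})$ ($j\ne i$), $u\in L_\infty$, the solution $x_i$ exists, is unique, and $\limsup_{t\to\infty}|x_i(t)|\le\sum_{j}\overline\gamma_{ij}(\|x_j\|_\infty)+\overline\gamma_i(\|u\|_\infty)$ if $i\in I_\Sigma$, and $\limsup_{t\to\infty}|x_i(t)|\le\max\{\max_j\overline\gamma_{ij}(\|x_j\|_\infty),\overline\gamma_i(\|u\|_\infty)\}$ if $i\in I_{\max}$. Assume further that solutions of the whole system $\dot x=f(x,u)$ exist for all positive times and are uniformly bounded. Let $\Gamma$ be the gain operator built from $(\overline\gamma_{ij})$ (with $\overline\gamma_{ii}\equiv0$). If there exists $\alpha\in\mathcal{K}_\infty$ such that $\Gamma\circ D_\alpha(s)\not\ge s$ for all $s\in\mathbb{R}^n_+\setminus\{0\}$, then the whole system has the AG property: there is $\overline\gamma\in\mathcal{K}$ with $\limsup_{t\to\infty}|x(t)|\le\overline\gamma(\|u\|_\infty)$ for all $x(0)$ and all $u\in L_\infty$.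
   Context: The interconnection is $\dot x_i=f_i(x_1,\dots,x_n,u_i)$, $i=1,\dots,n$, with $x_i\in\mathbb{R}^{N_i}$, $u_i\in\mathbb{R}^{m_i}$, where each $f_i$ is continuous and, for every $r$, locally Lipschitz in $x=(x_1^T,\dots,x_n^T)^T$ uniformly in $u_i$ with $|u_i|\le r$; it is written as $\dot x=f(x,u)$ with $u=(u_1^T,\dots,u_n^T)^T$. $\|\cdot\|_\infty$ is the essential supremum norm; $|\cdot|$ a norm. $\mathcal{K}$: continuous strictly increasing functions $\mathbb{R}_+\to\mathbb{R}_+$ vanishing at $0$; $\mathcal{K}_\infty$: unbounded ones. For $x,y\in\mathbb{R}^n$, $x\not\ge y$ means $x_i<y_i$ for some $i$. The gain operator is $\Gamma(s)=(\Gamma_1(s),\dots,\Gamma_n(s))^T$ with $\Gamma_i(s)=\sum_j\overline\gamma_{ij}(s_j)$ for $i\in I_\Sigma$ and $\Gamma_i(s)=\max_j\overline\gamma_{ij}(s_j)$ for $i\in I_{\max}$; $D_\alpha(s)=(D_1(s_1),\dots,D_n(s_n))^T$ with $D_i=\mathrm{id}+\alpha$ for $i\in I_\Sigma$ and $D_i=\mathrm{id}$ for $i\in I_{\max}$. *)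

theory Defs
  imports "HOL-Analysis.Analysis" "HOL-Probability.Essential_Supremum"
begin

definition class_K :: "(real \<Rightarrow> real) \<Rightarrow> bool" where
  "class_K g \<longleftrightarrow> continuous_on {0..} g \<and> strict_mono_on {0..} g \<and> g 0 = 0"

definition class_K_inf :: "(real \<Rightarrow> real) \<Rightarrow> bool" where
  "class_K_inf g \<longleftrightarrow> class_K g \<and> (\<forall>M. \<exists>s\<ge>0. g s > M)"

definition class_K0 :: "(real \<Rightarrow> real) \<Rightarrow> bool" where
  "class_K0 g \<longleftrightarrow> class_K g \<or> (\<forall>s\<ge>0. g s = 0)"

definition Linf :: "(real \<Rightarrow> 'a::euclidean_space) \<Rightarrow> bool" where
  "Linf u \<longleftrightarrow> u \<in> borel_measurable (restrict_space lebesgue {0..})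
              \<and> (\<exists>B. AE t in lebesgue. 0 \<le> t \<longrightarrow> norm (u t) \<le> B)"

definition linf_norm :: "(real \<Rightarrow> 'a::euclidean_space) \<Rightarrow> real" where
  "linf_norm u = real_of_ereal (esssup (restrict_space lebesgue {0..}) (\<lambda>t. ereal (norm (u t))))"

text \<open>The full state space is R^N = real^'n, whose coordinates are
  partitioned into n blocks by blk :: 'n => nat (block i = coordinates k with blk k = i);
  block i is the state x_i in R^{N_i}, N_i = card of block i. Likewise for inputs.
  blkv blk i x is x with all coordinates outside block i set to zero, so that
  norm (blkv blk i x) is the (Euclidean) norm of the component x_i.\<close>

definition blkv :: "('n \<Rightarrow> nat) \<Rightarrow> nat \<Rightarrow> real^'n \<Rightarrow> real^'n" where
  "blkv blk i x = (\<chi> k. if blk k = i then x $ k else 0)"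

text \<open>Replace block i of w by block i of a (the other blocks of w act as external inputs).\<close>
definition merge_blk :: "('n \<Rightarrow> nat) \<Rightarrow> nat \<Rightarrow> real^'n \<Rightarrow> real^'n \<Rightarrow> real^'n" where
  "merge_blk blk i a w = blkv blk i a + (w - blkv blk i w)"

definition sys_solution ::
  "(real^'n \<Rightarrow> real^'m \<Rightarrow> real^'n) \<Rightarrow> (real \<Rightarrow> real^'m) \<Rightarrow> (real \<Rightarrow> real^'n) \<Rightarrow> bool" where
  "sys_solution f u x \<longleftrightarrow> continuous_on {0..} x \<and>
     (\<forall>t\<ge>0. ((\<lambda>s. f (x s) (u s)) has_integral (x t - x 0)) {0..t})"

text \<open>(Caratheodory) solution on [0,oo) of subsystem i,
  x_i' = f_i(x_1,..,x_n,u_i), where x_j (j ~= i) are the blocks of the external input w.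
  The trajectory xi takes values in block i.\<close>
definition sub_solution ::
  "('n \<Rightarrow> nat) \<Rightarrow> (real^'n \<Rightarrow> real^'m \<Rightarrow> real^'n) \<Rightarrow> nat \<Rightarrow> (real \<Rightarrow> real^'n)
     \<Rightarrow> (real \<Rightarrow> real^'m) \<Rightarrow> (real \<Rightarrow> real^'n) \<Rightarrow> bool" where
  "sub_solution blk f i w u xi \<longleftrightarrow> continuous_on {0..} xi \<and>
     (\<forall>t\<ge>0. blkv blk i (xi t) = xi t) \<and>
     (\<forall>t\<ge>0. ((\<lambda>s. blkv blk i (f (merge_blk blk i (xi s) (w s)) (u s)))
               has_integral (xi t - xi 0)) {0..t})"

text \<open>Gain operator Gamma and D_alpha on R^n_+ (vectors s :: nat => real, indices < n).\<close>
definition gain_op ::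
  "nat \<Rightarrow> nat set \<Rightarrow> (nat \<Rightarrow> nat \<Rightarrow> real \<Rightarrow> real) \<Rightarrow> (nat \<Rightarrow> real) \<Rightarrow> nat \<Rightarrow> real" where
  "gain_op n Isum g s i =
     (if i \<in> Isum then (\<Sum>j<n. g i j (s j)) else Max ((\<lambda>j. g i j (s j)) ` {..<n}))"

definition D_alpha :: "nat set \<Rightarrow> (real \<Rightarrow> real) \<Rightarrow> (nat \<Rightarrow> real) \<Rightarrow> nat \<Rightarrow> real" where
  "D_alpha Isum \<alpha> s i = (if i \<in> Isum then s i + \<alpha> (s i) else s i)"

definition AG_sub ::
  "nat \<Rightarrow> nat set \<Rightarrow> ('n \<Rightarrow> nat) \<Rightarrow> (real^'n \<Rightarrow> real^'m \<Rightarrow> real^'n)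
     \<Rightarrow> (nat \<Rightarrow> nat \<Rightarrow> real \<Rightarrow> real) \<Rightarrow> (nat \<Rightarrow> real \<Rightarrow> real) \<Rightarrow> nat \<Rightarrow> bool" where
  "AG_sub n Isum blk f g gu i \<longleftrightarrow>
    (\<forall>w u. Linf w \<and> Linf u \<longrightarrow>
       (\<forall>x0. blkv blk i x0 = x0 \<longrightarrow> (\<exists>xi. sub_solution blk f i w u xi \<and> xi 0 = x0)) \<and>
       (\<forall>xi xi'. sub_solution blk f i w u xi \<and> sub_solution blk f i w u xi' \<and> xi 0 = xi' 0
            \<longrightarrow> (\<forall>t\<ge>0. xi t = xi' t)) \<and>
       (\<forall>xi. sub_solution blk f i w u xi \<longrightarrow>
          Limsup at_top (\<lambda>t. ereal (norm (xi t))) \<le>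
            ereal (if i \<in> Isum
                   then (\<Sum>j<n. g i j (linf_norm (\<lambda>t. blkv blk j (w t)))) + gu i (linf_norm u)
                   else max (Max ((\<lambda>j. g i j (linf_norm (\<lambda>t. blkv blk j (w t)))) ` {..<n}))
                            (gu i (linf_norm u)))))"

end

theory Submission
  imports Defs
begin


lemma K0_props:
  assumes "class_K0 g"
  shows "continuous_on {0..} g" "g 0 = 0" "\<And>a. 0 \<le> a \<Longrightarrow> 0 \<le> g a"
    "\<And>a b. 0 \<le> a \<Longrightarrow> a \<le> b \<Longrightarrow> g a \<le> g b"
proof -
  consider "class_K g" | "\<forall>s\<ge>0. g s = 0" using assms unfolding class_K0_def by blast
  then have all: "continuous_on {0..} g \<and> g 0 = 0 \<and> (\<forall>a b. 0 \<le> a \<longrightarrow> a \<le> b \<longrightarrow> g a \<le> g b)"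
  proof cases
    case 1
    then show ?thesis unfolding class_K_def
      by (auto intro: strict_mono_on_leD)
  next
    case 2
    have "continuous_on {0..} (\<lambda>_. 0::real)" by simp
    then have "continuous_on {0..} g" by (rule continuous_on_cong[THEN iffD1, rotated 2]) (use 2 in auto)
    then show ?thesis using 2 by auto
  qed
  then show "continuous_on {0..} g" "g 0 = 0" "\<And>a b. 0 \<le> a \<Longrightarrow> a \<le> b \<Longrightarrow> g a \<le> g b"
    by auto
  show "\<And>a. 0 \<le> a \<Longrightarrow> 0 \<le> g a" using all by (metis order_refl)
qed



lemma Kinf_inverse:
  assumes "class_K_inf \<alpha>"
  obtains h where "continuous_on {0..} h" "mono_on {0..} h" "h 0 = 0"
    "\<And>b. 0 \<le> b \<Longrightarrow> 0 \<le> h b \<and> \<alpha> (h b) = b"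
proof -
  have cont: "continuous_on {0..} \<alpha>" and sm: "strict_mono_on {0..} \<alpha>" and a0: "\<alpha> 0 = 0"
    and unb: "\<And>M. \<exists>s\<ge>0. \<alpha> s > M"
    using assms unfolding class_K_inf_def class_K_def by auto
  have ex: "\<exists>y\<ge>0. \<alpha> y = b" if b0: "0 \<le> b" for b
  proof -
    obtain s where s: "s \<ge> 0" "\<alpha> s > b" using unb by blast
    have "continuous_on {0..s} \<alpha>" using cont by (rule continuous_on_subset) auto
    then obtain y where "0 \<le> y" "y \<le> s" "\<alpha> y = b"
      using IVT'[of \<alpha> 0 b s] s b0 a0 by auto
    then show ?thesis by blast
  qed
  have inj: "inj_on \<alpha> {0..}" using sm by (rule strict_mono_on_imp_inj_on)
  define h where "h b = (THE y. y \<ge> 0 \<and> \<alpha> y = b)" for b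
  have hb: "0 \<le> h b \<and> \<alpha> (h b) = b" if b0: "0 \<le> b" for b
  proof -
    obtain y where y: "y \<ge> 0" "\<alpha> y = b" using ex[OF b0] by blast
    have "h b = y" unfolding h_def
      by (rule the_equality) (use y inj in \<open>auto simp: inj_on_def\<close>)
    then show ?thesis using y by auto
  qed
  have h_a: "h (\<alpha> y) = y" if y0: "y \<ge> 0" for y
  proof -
    have "\<alpha> y \<ge> 0" using strict_mono_on_leD[OF sm, of 0 y] a0 y0 by auto
    then have "0 \<le> h (\<alpha> y)" "\<alpha> (h (\<alpha> y)) = \<alpha> y" using hb by auto
    then show ?thesis using inj y0 by (auto simp: inj_on_def)
  qed
  have mono: "mono_on {0..} h"
  proof (rule mono_onI)
    fix a b :: real assume ab: "a \<in> {0..}" "b \<in> {0..}" "a \<le> b"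
    show "h a \<le> h b"
    proof (rule ccontr)
      assume "\<not> h a \<le> h b"
      then have "\<alpha> (h b) < \<alpha> (h a)" using hb ab by (intro strict_mono_onD[OF sm]) auto
      then show False using hb ab by auto
    qed
  qed
  have h0: "h 0 = 0" using h_a[of 0] a0 by simp
  have hcont: "continuous_on {0..} h"
  proof (rule continuous_on_eq_continuous_within[THEN iffD2], intro ballI)
    fix b :: real assume b: "b \<in> {0..}"
    obtain s where s: "s \<ge> 0" "\<alpha> s > b + 1" using unb by blast
    have c1: "continuous_on (\<alpha> ` {0..s}) h"
      by (rule continuous_on_inv) (use cont h_a in \<open>auto intro: continuous_on_subset\<close>)
    have img: "\<alpha> ` {0..s} = {0..\<alpha> s}"
    proof
      show "\<alpha> ` {0..s} \<subseteq> {0..\<alpha> s}"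
        proof
        fix z assume "z \<in> \<alpha> ` {0..s}"
        then obtain y where y: "0 \<le> y" "y \<le> s" "z = \<alpha> y" by auto
        show "z \<in> {0..\<alpha> s}"
          using strict_mono_on_leD[OF sm, of 0 y] strict_mono_on_leD[OF sm, of y s] y a0 by auto
      qed
      show "{0..\<alpha> s} \<subseteq> \<alpha> ` {0..s}"
      proof
        fix z assume z: "z \<in> {0..\<alpha> s}"
        have "continuous_on {0..s} \<alpha>" using cont by (rule continuous_on_subset) auto
        then obtain y where "0 \<le> y" "y \<le> s" "\<alpha> y = z"
          using IVT'[of \<alpha> 0 z s] s z a0 by auto
        then show "z \<in> \<alpha> ` {0..s}" by force
      qed
    qed
    have "continuous (at b within {0..\<alpha> s}) h"
      using c1 b s unfolding img by (auto simp: continuous_on_eq_continuous_within)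
    moreover have "at b within {0..} = at b within {0..\<alpha> s}"
      by (rule at_within_nhd[of _ "{..<\<alpha> s}"]) (use b s in auto)
    ultimately show "continuous (at b within {0..}) h" by simp
  qed
  show ?thesis using that hcont mono h0 hb by blast
qed



definition Gs :: "nat \<Rightarrow> (nat \<Rightarrow> nat \<Rightarrow> real \<Rightarrow> real) \<Rightarrow> real \<Rightarrow> real" where
  "Gs n g x = (\<Sum>i<n. \<Sum>j<n. g i j x)"

definition stp :: "nat \<Rightarrow> (nat \<Rightarrow> nat \<Rightarrow> real \<Rightarrow> real) \<Rightarrow> (real \<Rightarrow> real) \<Rightarrow> real \<Rightarrow> real" where
  "stp n g h b = b + Gs n g (b + h b)"

lemma Gs_nonneg: "(\<And>i j. i < n \<Longrightarrow> j < n \<Longrightarrow> class_K0 (g i j)) \<Longrightarrow> 0 \<le> x \<Longrightarrow> 0 \<le> Gs n g x"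
  unfolding Gs_def by (intro sum_nonneg) (auto intro: K0_props)

lemma Gs_ge: "(\<And>i j. i < n \<Longrightarrow> j < n \<Longrightarrow> class_K0 (g i j)) \<Longrightarrow> 0 \<le> x \<Longrightarrow> i < n \<Longrightarrow>
   (\<Sum>j<n. g i j x) \<le> Gs n g x"
  unfolding Gs_def by (rule member_le_sum) (auto intro!: sum_nonneg intro: K0_props)

lemma Gs_ge1:
  assumes gains: "\<And>i j. i < n \<Longrightarrow> j < n \<Longrightarrow> class_K0 (g i j)" and x: "0 \<le> x" and i: "i < n" and j: "j < n"
  shows "g i j x \<le> Gs n g x"
proof -
  have "g i j x \<le> (\<Sum>j<n. g i j x)"
    by (rule member_le_sum) (use j i x in \<open>auto intro: K0_props(3)[OF gains]\<close>)
  also have "\<dots> \<le> Gs n g x" using Gs_ge[OF gains x i] .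
  finally show ?thesis .
qed

lemma small_gain_bound:
  fixes n :: nat and Isum :: "nat set" and g :: "nat \<Rightarrow> nat \<Rightarrow> real \<Rightarrow> real"
    and \<alpha> h :: "real \<Rightarrow> real" and s :: "nat \<Rightarrow> real" and b :: real
  assumes gains: "\<And>i j. i < n \<Longrightarrow> j < n \<Longrightarrow> class_K0 (g i j)"
    and amono: "mono_on {0..} \<alpha>" and a0: "\<alpha> 0 = 0"
    and hmono: "mono_on {0..} h" and hb: "\<And>b. 0 \<le> b \<Longrightarrow> 0 \<le> h b \<and> \<alpha> (h b) = b"
    and sg: "\<And>s. (\<forall>i<n. 0 \<le> s i) \<Longrightarrow> (\<exists>i<n. s i \<noteq> 0) \<Longrightarrow>
             (\<exists>i<n. gain_op n Isum g (D_alpha Isum \<alpha> s) i < s i)"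
    and s0: "\<And>i. i < n \<Longrightarrow> 0 \<le> s i" and b0: "0 \<le> b"
    and ssum: "\<And>i. i < n \<Longrightarrow> i \<in> Isum \<Longrightarrow> s i \<le> (\<Sum>j<n. g i j (s j)) + b"
    and smax: "\<And>i. i < n \<Longrightarrow> i \<notin> Isum \<Longrightarrow> s i \<le> max (Max ((\<lambda>j. g i j (s j)) ` {..<n})) b"
    and i: "i < n"
  shows "s i \<le> (stp n g h ^^ n) b + h ((stp n g h ^^ n) b)"
proof -
  note K = K0_props[OF gains]
  define bk where "bk k = (stp n g h ^^ k) b" for k
  define T where "T k = bk k + h (bk k)" for k
  define L where "L k = {i. i < n \<and> s i > T k}" for k
  have bk_ge: "b \<le> bk k" for k
  proof (induction k)
    case 0 then show ?case by (simp add: bk_def)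
  next
    case (Suc k)
    have "0 \<le> h (bk k)" using hb Suc b0 by auto
    then have "0 \<le> Gs n g (bk k + h (bk k))" using Suc b0 by (intro Gs_nonneg gains) auto
    then show ?case using Suc by (simp add: bk_def stp_def)
  qed
  have bk_Suc: "bk (Suc k) = bk k + Gs n g (T k)" for k by (simp add: bk_def T_def stp_def)
  have T0: "0 \<le> T k" for k using bk_ge[of k] hb[of "bk k"] b0 by (auto simp: T_def)
  have bk_mono: "bk k \<le> bk (Suc k)" for k using bk_Suc[of k] Gs_nonneg[OF gains T0] by auto
  have T_mono: "T k \<le> T (Suc k)" for k
    using bk_mono[of k] mono_onD[OF hmono, of "bk k" "bk (Suc k)"] bk_ge[of k] b0
    by (auto simp: T_def)
  have L_sub: "L (Suc k) \<subseteq> L k" for k using T_mono[of k] by (auto simp: L_def)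
  have key: "L k = {}" if eq: "L (Suc k) = L k" for k
  proof (rule ccontr)
    assume ne: "L k \<noteq> {}"
    define I where "I = L k"
    define b' where "b' = bk (Suc k)"
    have b'0: "0 \<le> b'" using bk_ge b0 unfolding b'_def by (metis order_trans)
    have inI: "s j > b' + h b'" if "j \<in> I" for j
      using that eq unfolding I_def L_def T_def b'_def by auto
    have notI: "s j \<le> T k" if "j \<notin> I" "j < n" for j
      using that unfolding I_def L_def by auto
    have I_n: "I \<subseteq> {..<n}" unfolding I_def L_def by auto
    have b'_ge: "b + Gs n g (T k) \<le> b'" unfolding b'_def bk_Suc using bk_ge[of k] by simp
    define r where "r j = (if j \<in> I then (if j \<in> Isum then s j - b' else s j) else 0)" for j
    have hb'0: "0 \<le> h b'" using hb b'0 by auto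
    have r0: "0 \<le> r j" if "j < n" for j
      using inI[of j] hb'0 s0[OF that] b'0 by (auto simp: r_def)
    define Dr where "Dr = D_alpha Isum \<alpha> r"
    have Dr_I: "s j \<le> Dr j" if "j \<in> I" for j
    proof (cases "j \<in> Isum")
      case True
      have "h b' \<le> s j - b'" using inI[OF that] by simp
      then have "\<alpha> (h b') \<le> \<alpha> (s j - b')" using hb'0 by (intro mono_onD[OF amono]) auto
      then show ?thesis using hb[OF b'0] True that by (simp add: Dr_def D_alpha_def r_def)
    qed (use that in \<open>simp add: Dr_def D_alpha_def r_def\<close>)
    have Dr_nI: "Dr j = 0" if "j \<notin> I" for j using that a0 by (simp add: Dr_def D_alpha_def r_def)
    have Dr0: "0 \<le> Dr j" if "j < n" for j
    proof (cases "j \<in> I")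
      case True then show ?thesis using Dr_I[OF True] s0[OF that] by linarith
    qed (simp add: Dr_nI)
    have ge: "r i \<le> gain_op n Isum g Dr i" if i: "i < n" for i
    proof (cases "i \<in> I")
      case False
      have "0 \<le> gain_op n Isum g Dr i"
      proof (cases "i \<in> Isum")
        case True then show ?thesis unfolding gain_op_def
          using K(3)[OF i] Dr0 by (auto intro!: sum_nonneg)
      next
        case F: False
        have "0 \<le> g i 0 (Dr 0)" using K(3)[OF i _ Dr0] i by auto
        also have "\<dots> \<le> Max ((\<lambda>j. g i j (Dr j)) ` {..<n})" using i by (intro Max_ge) auto
        finally show ?thesis using F unfolding gain_op_def by simp
      qed
      then show ?thesis using False by (simp add: r_def)
    next
      case True
      show ?thesis
      proof (cases "i \<in> Isum")
        case Is: True
        have pt: "g i j (s j) \<le> g i j (Dr j) + g i j (T k)" if j: "j < n" for j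
        proof (cases "j \<in> I")
          case True
          have "g i j (s j) \<le> g i j (Dr j)" using K(4)[OF i j, of "s j" "Dr j"] s0[OF j] Dr_I[OF True] by blast
          then show ?thesis using K(3)[OF i j T0[of k]] by linarith
        next
          case False
          have "g i j (s j) \<le> g i j (T k)" using K(4)[OF i j, of "s j" "T k"] s0[OF j] notI[OF False j] by blast
          then show ?thesis using K(3)[OF i j Dr0[OF j]] by linarith
        qed
        have "s i \<le> (\<Sum>j<n. g i j (s j)) + b" using ssum[OF i Is] .
        also have "\<dots> \<le> (\<Sum>j<n. g i j (Dr j)) + (\<Sum>j<n. g i j (T k)) + b"
          using sum_mono[of "{..<n}", OF pt] by (simp add: sum.distrib)
        also have "\<dots> \<le> (\<Sum>j<n. g i j (Dr j)) + Gs n g (T k) + b"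
          using Gs_ge[OF gains T0 i] by simp
        finally have "s i - b' \<le> (\<Sum>j<n. g i j (Dr j))" using b'_ge by simp
        then show ?thesis using True Is by (simp add: r_def gain_op_def)
      next
        case Is: False
        have "0 \<le> Gs n g (T k)" by (rule Gs_nonneg[OF gains T0])
        then have "b < s i" using inI[OF True] hb'0 b'_ge by linarith
        then have "s i \<le> Max ((\<lambda>j. g i j (s j)) ` {..<n})" using smax[OF i Is] by linarith
        moreover obtain j where j: "j < n" "Max ((\<lambda>j. g i j (s j)) ` {..<n}) = g i j (s j)"
        proof -
          have "Max ((\<lambda>j. g i j (s j)) ` {..<n}) \<in> (\<lambda>j. g i j (s j)) ` {..<n}"
            using i by (intro Max_in) auto
          then show ?thesis using that by auto
        qed
        ultimately have sij: "s i \<le> g i j (s j)" by simp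
        have jI: "j \<in> I"
        proof (rule ccontr)
          assume "j \<notin> I"
          then have "g i j (s j) \<le> g i j (T k)" using K(4)[OF i j(1)] s0 j notI by auto
          also have "\<dots> \<le> Gs n g (T k)" using Gs_ge1[OF gains T0 i j(1)] .
          finally show False using sij inI[OF True] hb'0 b'_ge b0 by linarith
        qed
        have "s i \<le> g i j (Dr j)" using sij K(4)[OF i j(1), of "s j" "Dr j"] Dr_I[OF jI] s0 j by force
        also have "\<dots> \<le> Max ((\<lambda>j. g i j (Dr j)) ` {..<n})" using j by (intro Max_ge) auto
        finally show ?thesis using True Is by (simp add: r_def gain_op_def)
      qed
    qed
    obtain i0 where i0: "i0 \<in> I" using ne I_def by blast
    have "r i0 \<noteq> 0" using inI[OF i0] hb'0 b'0 i0 by (auto simp: r_def)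
    then obtain i where "i < n" "gain_op n Isum g Dr i < r i"
      using sg[of r] r0 i0 I_n unfolding Dr_def by blast
    then show False using ge by force
  qed
  have card: "L k = {} \<or> card (L k) + k \<le> n" for k
  proof (induction k)
    case 0
    have "L 0 \<subseteq> {..<n}" by (auto simp: L_def)
    then show ?case using card_mono[of "{..<n}" "L 0"] by auto
  next
    case (Suc k)
    show ?case
    proof (cases "L k = {}")
      case True then show ?thesis using L_sub[of k] by auto
    next
      case False
      then have "L (Suc k) \<subset> L k" using L_sub[of k] key[of k] by auto
      moreover have "finite (L k)" by (auto simp: L_def)
      ultimately have "card (L (Suc k)) < card (L k)" by (rule psubset_card_mono[rotated])
      then show ?thesis using Suc False by auto
    qed
  qed
  have "L n = {}"
  proof -
    have "finite (L n)" by (auto simp: L_def)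
    then show ?thesis using card[of n] by auto
  qed
  then show ?thesis using i unfolding L_def T_def bk_def by auto
qed



lemma AE_lebesgue_shift:
  assumes "AE t in lebesgue. P t"
  shows "AE t in lebesgue. P (t + (a::real))"
proof -
  obtain N where N: "{x \<in> space lebesgue. \<not> P x} \<subseteq> N" "emeasure lebesgue N = 0" "N \<in> sets lebesgue"
    using assms by (rule AE_E)
  define N' where "N' = (\<lambda>x. 1 *\<^sub>R x + (- a)) ` N"
  have e: "emeasure lebesgue N' = 0"
    unfolding N'_def using emeasure_lebesgue_affine[of "1::real" "-a" N] N by simp
  have "N' = (\<lambda>x. (- a) + x) ` N" unfolding N'_def by (auto simp: add.commute)
  then have s: "N' \<in> sets lebesgue" using lebesgue_sets_translation[OF N(3), of "-a"] by metis
  have "{x \<in> space lebesgue. \<not> P (x + a)} \<subseteq> N'"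
  proof
    fix x assume "x \<in> {x \<in> space lebesgue. \<not> P (x + a)}"
    then have "x + a \<in> N" using N(1) by auto
    then show "x \<in> N'" unfolding N'_def by (auto intro!: image_eqI[where x="x+a"])
  qed
  then show ?thesis using e s by (intro AE_I)
qed

lemma shift_measurable:
  assumes "u \<in> borel_measurable (restrict_space lebesgue {0..})" "0 \<le> (a::real)"
  shows "(\<lambda>t. u (t + a)) \<in> borel_measurable (restrict_space lebesgue {0..})"
proof -
  have "(\<lambda>x. a + 1 * x) \<in> lebesgue \<rightarrow>\<^sub>M lebesgue"
    using lebesgue_affine_measurable[where c= "\<lambda>x::real. 1" and t=a] by simp
  then have "(\<lambda>x. x + a) \<in> lebesgue \<rightarrow>\<^sub>M lebesgue" by (simp add: add.commute)
  then have "(\<lambda>x. x + a) \<in> restrict_space lebesgue {0..} \<rightarrow>\<^sub>M restrict_space lebesgue {0..}"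
    by (rule measurable_restrict_space3) (use assms in auto)
  then show ?thesis using assms(1) by (rule measurable_compose)
qed

lemma space_pos: "emeasure (restrict_space lebesgue {0::real..}) (space (restrict_space lebesgue {0::real..})) \<noteq> 0"
proof -
  have "emeasure (restrict_space lebesgue {0::real..}) (space (restrict_space lebesgue {0..}))
      = emeasure lebesgue {0::real..}"
    by (subst emeasure_restrict_space) auto
  moreover have "emeasure lebesgue {0::real..1} \<le> emeasure lebesgue {0::real..}"
    by (intro emeasure_mono) auto
  ultimately show ?thesis by auto
qed

lemma linf_norm_nonneg: "0 \<le> linf_norm (v :: real \<Rightarrow> 'a::euclidean_space)"
proof (cases "(\<lambda>t. ereal (norm (v t))) \<in> borel_measurable (restrict_space lebesgue {0..})")
  case True
  have "ae_filter (restrict_space lebesgue {0::real..}) \<noteq> bot"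
    using space_pos by (simp add: ae_filter_eq_bot_iff)
  then have "0 \<le> esssup (restrict_space lebesgue {0..}) (\<lambda>t. ereal (norm (v t)))"
    unfolding esssup_def using True by (auto intro!: le_Limsup)
  then show ?thesis unfolding linf_norm_def by (simp add: real_of_ereal_pos)
next
  case False
  then show ?thesis unfolding linf_norm_def by (simp add: esssup_non_measurable top_ereal_def)
qed

lemma linf_norm_le:
  fixes v :: "real \<Rightarrow> 'a::euclidean_space"
  assumes "v \<in> borel_measurable (restrict_space lebesgue {0..})" "\<And>t. 0 \<le> t \<Longrightarrow> norm (v t) \<le> c" "0 \<le> c"
  shows "linf_norm v \<le> c"
proof -
  have m: "(\<lambda>t. ereal (norm (v t))) \<in> borel_measurable (restrict_space lebesgue {0..})"
    using assms(1) by measurable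
  have "esssup (restrict_space lebesgue {0..}) (\<lambda>t. ereal (norm (v t))) \<le> ereal c"
    by (rule esssup_I[OF m]) (use assms(2) in \<open>auto simp: space_restrict_space\<close>)
  then show ?thesis unfolding linf_norm_def using assms(3)
    by (cases "esssup (restrict_space lebesgue {0..}) (\<lambda>t. ereal (norm (v t)))") auto
qed

lemma Linf_shift:
  fixes u :: "real \<Rightarrow> 'a::euclidean_space"
  assumes "Linf u" "0 \<le> a"
  shows "Linf (\<lambda>t. u (t + a))" "linf_norm (\<lambda>t. u (t + a)) \<le> linf_norm u"
proof -
  let ?M = "restrict_space lebesgue {0::real..}"
  have um: "u \<in> borel_measurable ?M" using assms unfolding Linf_def by auto
  obtain B where B: "AE t in lebesgue. 0 \<le> t \<longrightarrow> norm (u t) \<le> B" using assms unfolding Linf_def by auto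
  have sm: "(\<lambda>t. u (t + a)) \<in> borel_measurable ?M" by (rule shift_measurable[OF um assms(2)])
  have "AE t in lebesgue. 0 \<le> t \<longrightarrow> norm (u (t + a)) \<le> B"
    using AE_lebesgue_shift[OF B, of a] by eventually_elim (use assms(2) in auto)
  then show "Linf (\<lambda>t. u (t + a))" unfolding Linf_def using sm by blast
  have fm: "(\<lambda>t. ereal (norm (u t))) \<in> borel_measurable ?M" using um by measurable
  have fsm: "(\<lambda>t. ereal (norm (u (t + a)))) \<in> borel_measurable ?M" using sm by measurable
  define E where "E = esssup ?M (\<lambda>t. ereal (norm (u t)))"
  have "AE t in ?M. ereal (norm (u t)) \<le> E" unfolding E_def by (rule esssup_AE)
  then have "AE t in lebesgue. t \<in> {0..} \<longrightarrow> ereal (norm (u t)) \<le> E"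
    by (subst (asm) AE_restrict_space_iff) auto
  from AE_lebesgue_shift[OF this, of a]
  have "AE t in lebesgue. t \<in> {0..} \<longrightarrow> ereal (norm (u (t + a))) \<le> E"
    by eventually_elim (use assms(2) in auto)
  then have "AE t in ?M. ereal (norm (u (t + a))) \<le> E"
    by (subst AE_restrict_space_iff) auto
  then have E': "esssup ?M (\<lambda>t. ereal (norm (u (t + a)))) \<le> E" by (rule esssup_I[OF fsm])
  have "AE t in ?M. ereal (norm (u t)) \<le> ereal B"
    using B by (subst AE_restrict_space_iff) (auto elim: eventually_mono)
  then have EB: "E \<le> ereal B" unfolding E_def by (rule esssup_I[OF fm])
  have E0: "0 \<le> esssup ?M (\<lambda>t. ereal (norm (u (t + a))))"
  proof -
    have "ae_filter ?M \<noteq> bot" using space_pos by (simp add: ae_filter_eq_bot_iff)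
    then show ?thesis unfolding esssup_def using fsm by (auto intro!: le_Limsup)
  qed
  show "linf_norm (\<lambda>t. u (t + a)) \<le> linf_norm u"
    unfolding linf_norm_def E_def[symmetric] using E' EB E0
    by (cases E; cases "esssup ?M (\<lambda>t. ereal (norm (u (t + a))))") auto
qed

lemma Linf_cont:
  fixes v :: "real \<Rightarrow> 'a::euclidean_space"
  assumes "continuous_on {0..} v" "\<And>t. 0 \<le> t \<Longrightarrow> norm (v t) \<le> C"
  shows "Linf v" "v \<in> borel_measurable (restrict_space lebesgue {0..})"
proof -
  show m: "v \<in> borel_measurable (restrict_space lebesgue {0..})"
    by (rule continuous_imp_measurable_on_sets_lebesgue[OF assms(1)]) auto
  show "Linf v" unfolding Linf_def using m assms(2) by (auto intro!: AE_I2)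
qed



lemma blkv_lin: "bounded_linear (blkv blk i)"
proof -
  have "linear (blkv blk i)" by (auto simp: linear_iff blkv_def vec_eq_iff)
  then show ?thesis by (rule linear_conv_bounded_linear[THEN iffD1])
qed

lemma blkv_idem: "blkv blk i (blkv blk i x) = blkv blk i x"
  by (simp add: blkv_def vec_eq_iff)

lemma merge_blkv: "merge_blk blk i (blkv blk i x) x = x"
  by (simp add: merge_blk_def blkv_idem)

lemma norm_blkv: "norm (blkv blk i x) \<le> norm x"
  by (rule norm_le_componentwise_cart) (simp add: blkv_def)

lemma sum_blkv: "range blk \<subseteq> A \<Longrightarrow> finite A \<Longrightarrow> (\<Sum>i\<in>A. blkv blk i x) = x"
proof -
  assume A: "range blk \<subseteq> A" "finite A"
  have "(\<Sum>i\<in>A. blkv blk i x) $ k = x $ k" for k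
  proof -
    have "(\<Sum>i\<in>A. blkv blk i x) $ k = (\<Sum>i\<in>A. if blk k = i then x $ k else 0)"
      unfolding sum_component by (simp add: blkv_def)
    also have "\<dots> = x $ k" using A by (simp add: sum.delta' subset_iff)
    finally show ?thesis .
  qed
  then show ?thesis by (simp add: vec_eq_iff)
qed

lemma shifted_sub_solution:
  assumes sol: "sys_solution f u x" and tau: "0 \<le> \<tau>"
  shows "sub_solution blk f i (\<lambda>t. x (t + \<tau>)) (\<lambda>t. u (t + \<tau>)) (\<lambda>t. blkv blk i (x (t + \<tau>)))"
proof -
  have xc: "continuous_on {0..} x" and xi: "\<And>t. 0 \<le> t \<Longrightarrow> ((\<lambda>s. f (x s) (u s)) has_integral (x t - x 0)) {0..t}"
    using sol unfolding sys_solution_def by auto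
  let ?F = "\<lambda>s. f (x s) (u s)"
  have c1: "continuous_on {0..} (\<lambda>t. x (t + \<tau>))"
    by (rule continuous_on_compose2[OF xc]) (auto intro!: continuous_intros simp: tau)
  have c2: "continuous_on {0..} (\<lambda>t. blkv blk i (x (t + \<tau>)))"
    using bounded_linear.continuous_on[OF blkv_lin c1] .
  have int: "((\<lambda>s. blkv blk i (f (merge_blk blk i (blkv blk i (x (s + \<tau>))) (x (s + \<tau>))) (u (s + \<tau>))))
        has_integral (blkv blk i (x (t + \<tau>)) - blkv blk i (x (0 + \<tau>)))) {0..t}" if t: "0 \<le> t" for t
  proof -
    have I1: "(?F has_integral (x (t + \<tau>) - x 0)) {0..t + \<tau>}" using xi t tau by auto
    have I2: "(?F has_integral (x \<tau> - x 0)) {0..\<tau>}" using xi tau by auto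
    have "?F integrable_on {\<tau>..t + \<tau>}"
      using integrable_subinterval_real[OF has_integral_integrable[OF I1]] tau by auto
    then have I3: "(?F has_integral integral {\<tau>..t + \<tau>} ?F) {\<tau>..t + \<tau>}" by auto
    have "(?F has_integral (x \<tau> - x 0 + integral {\<tau>..t + \<tau>} ?F)) {0..t + \<tau>}"
      by (rule has_integral_combine[OF tau _ I2 I3]) (use t in auto)
    then have "x \<tau> - x 0 + integral {\<tau>..t + \<tau>} ?F = x (t + \<tau>) - x 0"
      using I1 by (rule has_integral_unique)
    then have H: "x \<tau> - x 0 + integral {\<tau>..t + \<tau>} ?F = x (t + \<tau>) - x 0" .
    have "integral {\<tau>..t + \<tau>} ?F = (x \<tau> - x 0 + integral {\<tau>..t + \<tau>} ?F) - (x \<tau> - x 0)"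
      by (rule add_diff_cancel_left'[symmetric])
    also have "\<dots> = (x (t + \<tau>) - x 0) - (x \<tau> - x 0)" unfolding H ..
    also have "\<dots> = x (t + \<tau>) - x \<tau>" by simp
    finally have eq: "integral {\<tau>..t + \<tau>} ?F = x (t + \<tau>) - x \<tau>" .
    have "(?F has_integral (x (t + \<tau>) - x \<tau>)) {0 + \<tau>..t + \<tau>}" using I3 unfolding eq by simp
    then have "((?F \<circ> (+) \<tau>) has_integral (x (t + \<tau>) - x \<tau>)) {0..t}"
      by (subst has_integral_shift_Icc_real) 
    then have "((blkv blk i \<circ> (?F \<circ> (+) \<tau>)) has_integral blkv blk i (x (t + \<tau>) - x \<tau>)) {0..t}"
      by (rule has_integral_linear[OF _ blkv_lin])
    then show ?thesis
      by (simp add: merge_blkv o_def add.commute linear_diff[OF bounded_linear.linear[OF blkv_lin]])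
  qed
  show ?thesis unfolding sub_solution_def
    using c2 int by (auto simp: blkv_idem)
qed



lemma Limsup_shift_le:
  fixes f :: "real \<Rightarrow> ereal"
  assumes "Limsup at_top (\<lambda>t. f (t + a)) \<le> C"
  shows "Limsup at_top f \<le> C"
  unfolding Limsup_le_iff
proof (intro allI impI)
  fix y assume "C < y"
  have "eventually (\<lambda>t. f (t + a) < y) at_top" by (rule Limsup_lessD[OF le_less_trans[OF assms \<open>C < y\<close>]])
  then obtain N where N: "\<And>t. t \<ge> N \<Longrightarrow> f (t + a) < y" by (auto simp: eventually_at_top_linorder)
  show "eventually (\<lambda>t. f t < y) at_top" unfolding eventually_at_top_linorder
  proof (intro exI[of _ "N + a"] allI impI)
    fix t assume "N + a \<le> t"
    then show "f t < y" using N[of "t - a"] by simp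
  qed
qed

lemma tendsto_Max_fin:
  fixes a :: "nat \<Rightarrow> 'b \<Rightarrow> real"
  assumes "finite A" "A \<noteq> {}" "\<And>j. j \<in> A \<Longrightarrow> ((a j) \<longlongrightarrow> a0 j) F"
  shows "((\<lambda>e. Max ((\<lambda>j. a j e) ` A)) \<longlongrightarrow> Max (a0 ` A)) F"
  using assms
proof (induction A rule: finite_ne_induct)
  case (singleton x)
  then show ?case by simp
next
  case (insert x B)
  have "((\<lambda>e. max (a x e) (Max ((\<lambda>j. a j e) ` B))) \<longlongrightarrow> max (a0 x) (Max (a0 ` B))) F"
    using insert by (intro tendsto_max) auto
  then show ?case using insert by simp
qed

lemma Max_mono_fin:
  fixes a b :: "nat \<Rightarrow> real"
  assumes "finite A" "A \<noteq> {}" "\<And>j. j \<in> A \<Longrightarrow> a j \<le> b j"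
  shows "Max (a ` A) \<le> Max (b ` A)"
proof (rule Max.boundedI)
  show "finite (a ` A)" "a ` A \<noteq> {}" using assms by auto
  fix y assume "y \<in> a ` A"
  then obtain j where j: "j \<in> A" "y = a j" by auto
  have "b j \<le> Max (b ` A)" using assms j by (intro Max_ge) auto
  then show "y \<le> Max (b ` A)" using assms(3)[OF j(1)] j by linarith
qed

lemma iter_props:
  fixes F :: "real \<Rightarrow> real"
  assumes "continuous_on {0..} F" "mono_on {0..} F" "\<And>b. 0 \<le> b \<Longrightarrow> 0 \<le> F b" "F 0 = 0"
  shows "continuous_on {0..} (F ^^ k) \<and> mono_on {0..} (F ^^ k) \<and> (\<forall>b\<ge>0. 0 \<le> (F ^^ k) b) \<and> (F ^^ k) 0 = 0"
proof (induction k)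
  case 0
  then show ?case by (auto simp: mono_on_def)
next
  case (Suc k)
  have c: "continuous_on {0..} (\<lambda>b. F ((F ^^ k) b))"
    by (rule continuous_on_compose2[OF assms(1)]) (use Suc in auto)
  have m: "mono_on {0..} (\<lambda>b. F ((F ^^ k) b))"
    using Suc assms(2) by (auto simp: mono_on_def)
  show ?case using c m Suc assms(3,4) by auto
qed



lemma Gs_props:
  assumes gains: "\<And>i j. i < n \<Longrightarrow> j < n \<Longrightarrow> class_K0 (g i j)"
  shows "continuous_on {0..} (Gs n g)" "mono_on {0..} (Gs n g)" "Gs n g 0 = 0"
proof -
  note K = K0_props[OF gains]
  show "continuous_on {0..} (Gs n g)" unfolding Gs_def[abs_def]
    by (intro continuous_on_sum) (auto intro: K(1))
  show "mono_on {0..} (Gs n g)" unfolding Gs_def[abs_def]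
    by (intro mono_onI sum_mono) (auto intro: K(4))
  show "Gs n g 0 = 0" unfolding Gs_def using K(2) by simp
qed

lemma gamma_K:
  fixes n :: nat and g :: "nat \<Rightarrow> nat \<Rightarrow> real \<Rightarrow> real" and gu :: "nat \<Rightarrow> real \<Rightarrow> real" and h :: "real \<Rightarrow> real"
  assumes gains: "\<And>i j. i < n \<Longrightarrow> j < n \<Longrightarrow> class_K0 (g i j)"
    and gains_u: "\<And>i. i < n \<Longrightarrow> class_K0 (gu i)"
    and hc: "continuous_on {0..} h" and hm: "mono_on {0..} h" and h0: "h 0 = 0"
    and hb: "\<And>b. 0 \<le> b \<Longrightarrow> 0 \<le> h b"
  shows "class_K (\<lambda>v. real n * ((stp n g h ^^ n) (\<Sum>i<n. gu i v) + h ((stp n g h ^^ n) (\<Sum>i<n. gu i v))) + v)"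
proof -
  note K = K0_props[OF gains] and Ku = K0_props[OF gains_u]
  note G = Gs_props[OF gains]
  have sc: "continuous_on {0..} (stp n g h)" unfolding stp_def[abs_def]
    by (intro continuous_intros continuous_on_compose2[OF G(1)] hc) (auto intro: hb add_nonneg_nonneg)
  have sm: "mono_on {0..} (stp n g h)" unfolding stp_def[abs_def]
  proof (intro mono_onI add_mono)
    fix a b :: real assume ab: "a \<in> {0..}" "b \<in> {0..}" "a \<le> b"
    then show "a \<le> b" by simp
    have "h a \<le> h b" using mono_onD[OF hm] ab by auto
    then show "Gs n g (a + h a) \<le> Gs n g (b + h b)"
      using ab hb[of a] by (intro mono_onD[OF G(2)]) auto
  qed
  have sn: "0 \<le> stp n g h b" if "0 \<le> b" for b
    unfolding stp_def using that hb[OF that] by (auto intro!: add_nonneg_nonneg Gs_nonneg[OF gains])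
  have s0: "stp n g h 0 = 0" unfolding stp_def using h0 G(3) by simp
  note I = iter_props[OF sc sm sn s0, of n]
  define B where "B v = (\<Sum>i<n. gu i v)" for v
  have Bc: "continuous_on {0..} B" unfolding B_def[abs_def] by (intro continuous_on_sum) (auto intro: Ku(1))
  have Bm: "mono_on {0..} B" unfolding B_def[abs_def] by (intro mono_onI sum_mono) (auto intro: Ku(4))
  have Bn: "0 \<le> B v" if "0 \<le> v" for v unfolding B_def using that by (auto intro!: sum_nonneg Ku(3))
  have B0: "B 0 = 0" unfolding B_def using Ku(2) by simp
  define P where "P b = (stp n g h ^^ n) b + h ((stp n g h ^^ n) b)" for b
  have Pc: "continuous_on {0..} P" unfolding P_def[abs_def]
    by (intro continuous_intros continuous_on_compose2[OF hc]) (use I in auto)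
  have Pm: "mono_on {0..} P" unfolding P_def[abs_def]
  proof (intro mono_onI add_mono)
    fix a b :: real assume ab: "a \<in> {0..}" "b \<in> {0..}" "a \<le> b"
    then show le: "(stp n g h ^^ n) a \<le> (stp n g h ^^ n) b" using I by (auto simp: mono_on_def)
    show "h ((stp n g h ^^ n) a) \<le> h ((stp n g h ^^ n) b)"
      by (rule mono_onD[OF hm]) (use I ab le in auto)
  qed
  have P0: "P 0 = 0" unfolding P_def using I h0 by simp
  have "continuous_on {0..} (\<lambda>v. real n * P (B v) + v)"
    by (intro continuous_intros continuous_on_compose2[OF Pc Bc]) (auto intro: Bn)
  moreover have "strict_mono_on {0..} (\<lambda>v. real n * P (B v) + v)"
  proof (rule strict_mono_onI)
    fix a b :: real assume ab: "a \<in> {0..}" "b \<in> {0..}" "a < b"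
    have "B a \<le> B b" using mono_onD[OF Bm] ab by auto
    then have "P (B a) \<le> P (B b)" using ab Bn by (intro mono_onD[OF Pm]) auto
    then have "real n * P (B a) \<le> real n * P (B b)" by (intro mult_left_mono) auto
    then show "real n * P (B a) + a < real n * P (B b) + b" using ab by linarith
  qed
  ultimately show ?thesis unfolding class_K_def using P0 B0 by (simp add: P_def B_def)
qed



theorem theorem2:
  fixes n :: nat and Isum :: "nat set"
    and blk :: "'n::finite \<Rightarrow> nat" and ublk :: "'m::finite \<Rightarrow> nat"
    and f :: "real^'n \<Rightarrow> real^'m \<Rightarrow> real^'n"
    and g :: "nat \<Rightarrow> nat \<Rightarrow> real \<Rightarrow> real" and gu :: "nat \<Rightarrow> real \<Rightarrow> real"
    and \<alpha> :: "real \<Rightarrow> real"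
  assumes blocks: "range blk = {..<n}" "range ublk = {..<n}"
    and partition: "Isum \<subseteq> {..<n}"
    and f_cont: "continuous_on UNIV (\<lambda>(x, u). f x u)"
    and f_lip: "\<And>r x0. \<exists>\<delta>>0. \<exists>L. \<forall>x\<in>ball x0 \<delta>. \<forall>y\<in>ball x0 \<delta>. \<forall>u.
                   norm u \<le> r \<longrightarrow> norm (f x u - f y u) \<le> L * norm (x - y)"
    and f_ui: "\<And>i x u u'. i < n \<Longrightarrow> (\<forall>k. ublk k = i \<longrightarrow> u $ k = u' $ k) \<Longrightarrow>
                   blkv blk i (f x u) = blkv blk i (f x u')"
    and gains: "\<And>i j. i < n \<Longrightarrow> j < n \<Longrightarrow> class_K0 (g i j)"
    and gains_u: "\<And>i. i < n \<Longrightarrow> class_K0 (gu i)"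
    and gain_diag: "\<And>i s. i < n \<Longrightarrow> 0 \<le> s \<Longrightarrow> g i i s = 0"
    and AG: "\<And>i. i < n \<Longrightarrow> AG_sub n Isum blk f g gu i"
    and exist: "\<And>x0 u. Linf u \<Longrightarrow> \<exists>x. sys_solution f u x \<and> x 0 = x0"
    and unif_bdd: "\<And>r. \<exists>C. \<forall>x u. Linf u \<and> linf_norm u \<le> r \<and> sys_solution f u x \<and> norm (x 0) \<le> r
                     \<longrightarrow> (\<forall>t\<ge>0. norm (x t) \<le> C)"
    and small_gain: "class_K_inf \<alpha>"
      "\<And>s. (\<forall>i<n. 0 \<le> s i) \<Longrightarrow> (\<exists>i<n. s i \<noteq> 0) \<Longrightarrow>
             (\<exists>i<n. gain_op n Isum g (D_alpha Isum \<alpha> s) i < s i)"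
  shows "\<exists>\<gamma>. class_K \<gamma> \<and>
           (\<forall>x u. Linf u \<and> sys_solution f u x \<longrightarrow>
              Limsup at_top (\<lambda>t. ereal (norm (x t))) \<le> ereal (\<gamma> (linf_norm u)))"
proof -
  obtain h where hc: "continuous_on {0..} h" and hm: "mono_on {0..} h" and h0: "h 0 = 0"
    and hb: "\<And>b. 0 \<le> b \<Longrightarrow> 0 \<le> h b \<and> \<alpha> (h b) = b"
    using Kinf_inverse[OF small_gain(1)] by blast
  have amono: "mono_on {0..} \<alpha>" and a0: "\<alpha> 0 = 0"
    using small_gain(1) unfolding class_K_inf_def class_K_def
    by (auto intro: strict_mono_on_imp_mono_on)
  note K = K0_props[OF gains] and Ku = K0_props[OF gains_u]
  define \<Phi> where "\<Phi> b = (stp n g h ^^ n) b + h ((stp n g h ^^ n) b)" for b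
  define \<gamma> where "\<gamma> v = real n * \<Phi> (\<Sum>i<n. gu i v) + v" for v
  have \<gamma>K: "class_K \<gamma>" unfolding \<gamma>_def \<Phi>_def
    by (rule gamma_K[OF gains gains_u hc hm h0]) (use hb in auto)
  have n0: "0 < n" using blocks(1) by (metis lessThan_iff not_less_zero rangeI zero_less_iff_neq_zero)
  show ?thesis
  proof (intro exI[of _ \<gamma>] conjI \<gamma>K allI impI)
    fix x :: "real \<Rightarrow> real^'n" and u :: "real \<Rightarrow> real^'m"
    assume xu: "Linf u \<and> sys_solution f u x"
    then have Lu: "Linf u" and sol: "sys_solution f u x" by auto
    define v where "v = linf_norm u"
    have v0: "0 \<le> v" unfolding v_def by (rule linf_norm_nonneg)
    obtain C where C: "\<And>t. 0 \<le> t \<Longrightarrow> norm (x t) \<le> C"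
      using unif_bdd[of "max (norm (x 0)) v"] Lu sol unfolding v_def by force
    have xc: "continuous_on {0..} x" using sol unfolding sys_solution_def by auto
    define li where "li i = real_of_ereal (Limsup at_top (\<lambda>t. ereal (norm (blkv blk i (x t)))))" for i
    have leq: "Limsup at_top (\<lambda>t. ereal (norm (blkv blk i (x t)))) = ereal (li i)" and li0: "0 \<le> li i" for i
    proof -
      have "\<forall>\<^sub>F t in at_top. ereal (norm (blkv blk i (x t))) \<le> ereal C"
        using eventually_ge_at_top[of "0::real"]
      proof eventually_elim
        case (elim t) then show ?case using order_trans[OF norm_blkv C[OF elim]] by simp
      qed
      then have "Limsup at_top (\<lambda>t. ereal (norm (blkv blk i (x t)))) \<le> ereal C"
        by (rule Limsup_bounded)
      moreover have "0 \<le> Limsup at_top (\<lambda>t. ereal (norm (blkv blk i (x t))))"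
        by (intro le_Limsup) auto
      ultimately show "Limsup at_top (\<lambda>t. ereal (norm (blkv blk i (x t)))) = ereal (li i)" "0 \<le> li i"
        unfolding li_def by (cases "Limsup at_top (\<lambda>t. ereal (norm (blkv blk i (x t))))"; simp)+
    qed
    have ev: "eventually (\<lambda>t. \<forall>j\<in>{..<n}. norm (blkv blk j (x t)) < li j + \<epsilon>) at_top" if \<epsilon>: "0 < \<epsilon>" for \<epsilon>
    proof (rule eventually_ball_finite, simp, intro ballI)
      fix j
      have "Limsup at_top (\<lambda>t. ereal (norm (blkv blk j (x t)))) < ereal (li j + \<epsilon>)"
        using leq[of j] \<epsilon> by simp
      from Limsup_lessD[OF this]
      show "eventually (\<lambda>t. norm (blkv blk j (x t)) < li j + \<epsilon>) at_top" by simp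
    qed
    define RHS where "RHS i \<epsilon> = (if i \<in> Isum then (\<Sum>j<n. g i j (li j + \<epsilon>)) + gu i v
          else max (Max ((\<lambda>j. g i j (li j + \<epsilon>)) ` {..<n})) (gu i v))" for i \<epsilon>
    have AGb: "li i \<le> RHS i \<epsilon>" if i: "i < n" and \<epsilon>: "0 < \<epsilon>" for i \<epsilon>
    proof -
      obtain N where N: "\<And>t. t \<ge> N \<Longrightarrow> \<forall>j\<in>{..<n}. norm (blkv blk j (x t)) < li j + \<epsilon>"
        using ev[OF \<epsilon>] by (auto simp: eventually_at_top_linorder)
      define \<tau> where "\<tau> = max N 0"
      have \<tau>0: "0 \<le> \<tau>" unfolding \<tau>_def by simp
      define w where "w t = x (t + \<tau>)" for t
      define u' where "u' t = u (t + \<tau>)" for t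
      have wc: "continuous_on {0..} w" unfolding w_def
        by (rule continuous_on_compose2[OF xc]) (auto intro!: continuous_intros simp: \<tau>0)
      have Lw: "Linf w" using Linf_cont(1)[OF wc, of C] C \<tau>0 unfolding w_def by auto
      have Lu': "Linf u'" unfolding u'_def by (rule Linf_shift(1)[OF Lu \<tau>0])
      have vu: "linf_norm u' \<le> v" unfolding u'_def v_def by (rule Linf_shift(2)[OF Lu \<tau>0])
      have vu0: "0 \<le> linf_norm u'" by (rule linf_norm_nonneg)
      have ss: "sub_solution blk f i w u' (\<lambda>t. blkv blk i (x (t + \<tau>)))"
        unfolding w_def u'_def by (rule shifted_sub_solution[OF sol \<tau>0])
      have AGi: "\<forall>xi. sub_solution blk f i w u' xi \<longrightarrow>
          Limsup at_top (\<lambda>t. ereal (norm (xi t))) \<le>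
            ereal (if i \<in> Isum
                   then (\<Sum>j<n. g i j (linf_norm (\<lambda>t. blkv blk j (w t)))) + gu i (linf_norm u')
                   else max (Max ((\<lambda>j. g i j (linf_norm (\<lambda>t. blkv blk j (w t)))) ` {..<n}))
                            (gu i (linf_norm u')))"
        using AG[OF i] Lw Lu' unfolding AG_sub_def by blast
      have wj: "0 \<le> linf_norm (\<lambda>t. blkv blk j (w t)) \<and> linf_norm (\<lambda>t. blkv blk j (w t)) \<le> li j + \<epsilon>"
        if j: "j < n" for j
      proof
        show "0 \<le> linf_norm (\<lambda>t. blkv blk j (w t))" by (rule linf_norm_nonneg)
        have wjc: "continuous_on {0..} (\<lambda>t. blkv blk j (w t))"
          using bounded_linear.continuous_on[OF blkv_lin wc] .
        have m: "(\<lambda>t. blkv blk j (w t)) \<in> borel_measurable (restrict_space lebesgue {0..})"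
        proof (rule Linf_cont(2)[OF wjc, of C])
          fix t :: real assume "0 \<le> t"
          then show "norm (blkv blk j (w t)) \<le> C" unfolding w_def
            using order_trans[OF norm_blkv C[of "t + \<tau>"]] \<tau>0 by simp
        qed
        show "linf_norm (\<lambda>t. blkv blk j (w t)) \<le> li j + \<epsilon>"
        proof (rule linf_norm_le[OF m])
          fix t :: real assume "0 \<le> t"
          then have "t + \<tau> \<ge> N" unfolding \<tau>_def by linarith
          then show "norm (blkv blk j (w t)) \<le> li j + \<epsilon>" using N[of "t + \<tau>"] j unfolding w_def by force
        next
          show "0 \<le> li j + \<epsilon>" using li0[of j] \<epsilon> by simp
        qed
      qed
      have bnd: "(if i \<in> Isum
                   then (\<Sum>j<n. g i j (linf_norm (\<lambda>t. blkv blk j (w t)))) + gu i (linf_norm u')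
                   else max (Max ((\<lambda>j. g i j (linf_norm (\<lambda>t. blkv blk j (w t)))) ` {..<n}))
                            (gu i (linf_norm u'))) \<le> RHS i \<epsilon>"
      proof -
        have gj: "g i j (linf_norm (\<lambda>t. blkv blk j (w t))) \<le> g i j (li j + \<epsilon>)" if "j < n" for j
          using K(4)[OF i that] wj[OF that] by blast
        have gu: "gu i (linf_norm u') \<le> gu i v" using Ku(4)[OF i vu0 vu] .
        show ?thesis
        proof (cases "i \<in> Isum")
          case True
          have "(\<Sum>j<n. g i j (linf_norm (\<lambda>t. blkv blk j (w t)))) \<le> (\<Sum>j<n. g i j (li j + \<epsilon>))"
            by (rule sum_mono) (use gj in simp)
          then show ?thesis unfolding RHS_def using gu True by simp
        next
          case False
          have "Max ((\<lambda>j. g i j (linf_norm (\<lambda>t. blkv blk j (w t)))) ` {..<n}) \<le> Max ((\<lambda>j. g i j (li j + \<epsilon>)) ` {..<n})"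
            by (rule Max_mono_fin) (use gj n0 in auto)
          then show ?thesis unfolding RHS_def using gu False by auto
        qed
      qed
      have "Limsup at_top (\<lambda>t. ereal (norm (blkv blk i (x (t + \<tau>))))) \<le> ereal (RHS i \<epsilon>)"
        using AGi ss bnd by (meson ereal_less_eq(3) order_trans)
      then have "Limsup at_top (\<lambda>t. ereal (norm (blkv blk i (x t)))) \<le> ereal (RHS i \<epsilon>)"
        by (rule Limsup_shift_le)
      then show ?thesis using leq[of i] by simp
    qed
    have tj: "((\<lambda>\<epsilon>. g i j (li j + \<epsilon>)) \<longlongrightarrow> g i j (li j)) (at_right 0)" if "i < n" "j < n" for i j
    proof (rule continuous_on_tendsto_compose[OF K(1)[OF that]])
      show "((\<lambda>\<epsilon>. li j + \<epsilon>) \<longlongrightarrow> li j) (at_right 0)"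
        using tendsto_add[OF tendsto_const[of "li j"] tendsto_ident_at[of 0 "{0<..}"]] by simp
      show "li j \<in> {0..}" using li0 by simp
      show "\<forall>\<^sub>F \<epsilon> in at_right 0. li j + \<epsilon> \<in> {0..}"
        using eventually_at_right_less[of "0::real"] by eventually_elim (use li0[of j] in auto)
    qed
    define b where "b = (\<Sum>i<n. gu i v)"
    have gub: "gu i v \<le> b" if "i < n" for i
      unfolding b_def by (rule member_le_sum) (use that v0 Ku(3) in auto)
    have ssum: "li i \<le> (\<Sum>j<n. g i j (li j)) + b" if i: "i < n" and Is: "i \<in> Isum" for i
    proof -
      have "((\<lambda>\<epsilon>. RHS i \<epsilon>) \<longlongrightarrow> (\<Sum>j<n. g i j (li j)) + gu i v) (at_right 0)"
        unfolding RHS_def using Is by (simp, intro tendsto_intros tj i) auto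
      then have "li i \<le> (\<Sum>j<n. g i j (li j)) + gu i v"
        by (rule tendsto_lowerbound) (use eventually_at_right_less[of "0::real"] AGb[OF i] in \<open>auto elim: eventually_mono\<close>)
      then show ?thesis using gub[OF i] by simp
    qed
    have smax: "li i \<le> max (Max ((\<lambda>j. g i j (li j)) ` {..<n})) b" if i: "i < n" and Is: "i \<notin> Isum" for i
    proof -
      have "((\<lambda>\<epsilon>. RHS i \<epsilon>) \<longlongrightarrow> max (Max ((\<lambda>j. g i j (li j)) ` {..<n})) (gu i v)) (at_right 0)"
        unfolding RHS_def using Is
        by (simp, intro tendsto_max tendsto_Max_fin tendsto_const) (use n0 tj i in auto)
      then have "li i \<le> max (Max ((\<lambda>j. g i j (li j)) ` {..<n})) (gu i v)"
        by (rule tendsto_lowerbound) (use eventually_at_right_less[of "0::real"] AGb[OF i] in \<open>auto elim: eventually_mono\<close>)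
      then show ?thesis using gub[OF i] by linarith
    qed
    have b0: "0 \<le> b" unfolding b_def using v0 Ku(3) by (auto intro!: sum_nonneg)
    have libnd: "li i \<le> \<Phi> b" if "i < n" for i
      unfolding \<Phi>_def
      by (rule small_gain_bound[OF gains amono a0 hm _ small_gain(2) li0 b0 ssum smax that])
         (use hb in auto)
    show "Limsup at_top (\<lambda>t. ereal (norm (x t))) \<le> ereal (\<gamma> (linf_norm u))"
      unfolding Limsup_le_iff
    proof (intro allI impI)
      fix y :: ereal assume y: "ereal (\<gamma> (linf_norm u)) < y"
      show "\<forall>\<^sub>F t in at_top. ereal (norm (x t)) < y"
      proof (cases y)
        case (real y')
        have sl: "(\<Sum>i<n. li i) \<le> real n * \<Phi> b"
          using sum_mono[of "{..<n}" li "\<lambda>_. \<Phi> b"] libnd by simp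
        have "real n * \<Phi> b \<le> \<gamma> (linf_norm u)" unfolding \<gamma>_def b_def v_def[symmetric] using v0 by simp
        then have yl: "(\<Sum>i<n. li i) < y'" using y real sl by simp
        define \<delta> where "\<delta> = (y' - (\<Sum>i<n. li i)) / real n"
        have \<delta>0: "0 < \<delta>" unfolding \<delta>_def using yl n0 by simp
        have "eventually (\<lambda>t. t \<ge> 0 \<and> (\<forall>j\<in>{..<n}. norm (blkv blk j (x t)) < li j + \<delta>)) at_top"
          by (rule eventually_conj[OF eventually_ge_at_top ev[OF \<delta>0]])
        then show ?thesis
        proof eventually_elim
          case (elim t)
          have "norm (x t) = norm (\<Sum>i<n. blkv blk i (x t))"
            using sum_blkv[of blk "{..<n}" "x t"] blocks(1) by simp
          also have "\<dots> \<le> (\<Sum>i<n. norm (blkv blk i (x t)))" by (rule norm_sum)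
          also have "\<dots> < (\<Sum>i<n. li i + \<delta>)"
            by (rule sum_strict_mono) (use elim n0 in auto)
          also have "\<dots> = y'" unfolding \<delta>_def sum.distrib using n0 by simp
          finally show ?case using real by simp
        qed
      qed (use y in auto)
    qed
  qed
qed


end
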